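(* Let $Q=\Diamond abcd$ be a convex quadrilateral with vertices $a,b,c,d$ in clockwise order, such that the diagonal $\overline{ac}$ is horizontal, $|ac|=1$, and $1$ is the diameter of $Q$. Let the smallest axis-parallel rectangle containing $Q$ have horizontal side length $1$ and vertical side length $W$ with $\frac{2}{\sqrt5}<W\le 1$, with $a$ on its left side, $b$ on its top side, $c$ on its right side and $d$ on its bottom side. Then there exists a triangle contained in $Q$ whose smallest side has length at least $\frac{\sqrt{1+5W^2}}{4}$. *)

theory Defs
  imports "HOL-Analysis.Analysis"
begin

definition cross2 :: "real \<times> real \<Rightarrow> real \<times> real \<Rightarrow> real" where
  "cross2 u v = fst u * snd v - snd u * fst v"

text \<open>a b c d are the vertices, in clockwise order, of a (strictly) convex quadrilateral:
  every consecutive triple makes a strict right turn.\<close>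

definition convex_quad_cw :: "real \<times> real \<Rightarrow> real \<times> real \<Rightarrow> real \<times> real \<Rightarrow> real \<times> real \<Rightarrow> bool" where
  "convex_quad_cw a b c d \<longleftrightarrow>
     cross2 (b - a) (c - b) < 0 \<and> cross2 (c - b) (d - c) < 0 \<and>
     cross2 (d - c) (a - d) < 0 \<and> cross2 (a - d) (b - a) < 0"

end

theory Submission
  imports Defs
begin
lemma core:
  fixes u h v k W S :: real
  assumes h: "h > 0" and k: "k > 0" and hk: "h + k = W" and hS: "4*h < S" and kS: "4*k < S"
    and S: "S^2 = 1 + 5*W^2" "S \<ge> 0" and W: "5*W^2 > 4" "W \<le> 1"
    and uv: "(u-v)^2 + W^2 \<le> 1" "u + v \<le> 1" "u \<le> v"
  shows "S^2/16 \<le> (1-u)^2 + h^2" "S^2/16 \<le> (v/2-u)^2 + (k/2+h)^2" "S^2/16 \<le> (1-v/2)^2 + (k/2)^2"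
proof -
  have W0: "W > 0" using h k hk by linarith
  have uv2: "(u-v)^2 < 1/4" using uv(1) W(1) by linarith
  have vu: "v - u < 1/2"
  proof (rule ccontr)
    assume "\<not> v - u < 1/2"
    hence "(1/2)^2 \<le> (v-u)^2" by (intro power_mono) auto
    moreover have "(v-u)^2 = (u-v)^2" by (simp add: power2_commute)
    ultimately show False using uv2 by (simp add: power2_eq_square)
  qed
  have u2: "u \<le> 1/2" and v34: "v \<le> 3/4" using uv vu by linarith+
  have W21: "W^2 \<le> 1" using W0 W(2) by (simp add: power_le_one)
  have WS1: "W*S \<le> 2*W^2 + 1/2"
  proof (rule power2_le_imp_le)
    have "(W*S)^2 = W^2 + 5*(W^2)^2" using S(1) by (simp add: power_mult_distrib algebra_simps)
    moreover have "(2*W^2+1/2)^2 = 4*(W^2)^2 + 2*W^2 + 1/4" by (simp add: power2_eq_square algebra_simps)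
    moreover have "W^2 * (1 - W^2) \<ge> 0" using W21 by simp
    ultimately show "(W*S)^2 \<le> (2*W^2+1/2)^2" by (simp add: power2_eq_square algebra_simps)
  qed simp
  have WS2: "4*W \<ge> S"
    by (rule power2_le_imp_le) (use S(1) W W0 in auto)
  have WS3: "8*W \<ge> 3*S"
    by (rule power2_le_imp_le) (use S(1) W W0 in \<open>auto simp: power_mult_distrib\<close>)
  have hlow: "h \<ge> W - S/4" using hk kS by linarith
  have "h^2 \<ge> (W - S/4)^2" using hlow WS2 by (intro power_mono) auto
  moreover have "(W - S/4)^2 = W^2 + S^2/16 - W*S/2" by (simp add: power2_diff power_divide algebra_simps)
  ultimately have h2: "h^2 \<ge> (5*W^2-3)/16" using WS1 S(1) by (simp add: field_simps)
  have "(1-u)^2 \<ge> (1/2)^2" using u2 by (intro power_mono) auto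
  moreover have "(1/2::real)^2 = 1/4" by (simp add: power2_eq_square)
  ultimately show "S^2/16 \<le> (1-u)^2 + h^2" using h2 S(1) by (simp add: field_simps)
  have "(k/2+h)^2 \<ge> (S/4)^2" using hk kS WS3 S(2) by (intro power_mono) auto
  moreover have "(v/2-u)^2 \<ge> 0" by simp
  moreover have "(S/4)^2 = S^2/16" by (simp add: power_divide)
  ultimately show "S^2/16 \<le> (v/2-u)^2 + (k/2+h)^2" by linarith
  have "(1-v/2)^2 \<ge> (5/8)^2" using v34 by (intro power_mono) auto
  moreover have "S^2 \<le> 6" using S(1) W21 by simp
  moreover have "(5/8::real)^2 = 25/64" by (simp add: power2_eq_square)
  moreover have "(k/2)^2 \<ge> 0" by simp
  ultimately show "S^2/16 \<le> (1-v/2)^2 + (k/2)^2" by linarith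
qed

lemma dist_ge:
  fixes p q :: "real \<times> real" and x y S :: real
  assumes "S^2/16 \<le> x^2 + y^2" "\<bar>fst p - fst q\<bar> = \<bar>x\<bar>" "\<bar>snd p - snd q\<bar> = \<bar>y\<bar>" "S \<ge> 0"
  shows "S/4 \<le> dist p q"
proof -
  have e: "dist p q = sqrt ((fst p - fst q)^2 + (snd p - snd q)^2)"
    by (cases p; cases q) (simp add: dist_Pair_Pair dist_real_def)
  have "(fst p - fst q)^2 = x^2" by (metis assms(2) power2_abs)
  moreover have "(snd p - snd q)^2 = y^2" by (metis assms(3) power2_abs)
  ultimately have e2: "dist p q = sqrt (x^2 + y^2)" using e by simp
  have "sqrt ((S/4)^2) \<le> sqrt (x^2+y^2)" using assms(1) by (simp add: power_divide)
  thus ?thesis using e2 assms(4) by simp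
qed

lemma coll_cross:
  fixes p q r :: "real \<times> real"
  assumes "collinear {p, q, r}"
  shows "cross2 (q - p) (r - p) = 0"
proof -
  obtain w where w: "\<forall>x\<in>{p,q,r}. \<forall>y\<in>{p,q,r}. \<exists>c. x - y = c *\<^sub>R w"
    using assms unfolding collinear_def by blast
  obtain c1 where c1: "q - p = c1 *\<^sub>R w" using w by blast
  obtain c2 where c2: "r - p = c2 *\<^sub>R w" using w by blast
  show ?thesis unfolding c1 c2 cross2_def by (simp add: algebra_simps)
qed

lemma tri:
  fixes p q r :: "real \<times> real" and H :: "(real \<times> real) set"
  assumes "convex H" "p \<in> H" "q \<in> H" "r \<in> H" "cross2 (q - p) (r - p) \<noteq> 0"
    "T \<le> dist p q" "T \<le> dist q r" "T \<le> dist r p"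
  shows "\<exists>p q r. \<not> collinear {p, q, r} \<and> convex hull {p, q, r} \<subseteq> H \<and>
           min (dist p q) (min (dist q r) (dist r p)) \<ge> T"
proof (intro exI conjI)
  show "\<not> collinear {p, q, r}" using coll_cross assms(5) by blast
  show "convex hull {p, q, r} \<subseteq> H" using assms(1-4) by (intro hull_minimal) auto
  show "min (dist p q) (min (dist q r) (dist r p)) \<ge> T" using assms(6-8) by simp
qed

theorem theorem2:
  fixes a b c d :: "real \<times> real" and W :: real
  assumes quad: "convex_quad_cw a b c d"
    and horiz: "snd a = snd c"
    and ac: "dist a c = 1"
    and diam: "diameter (convex hull {a, b, c, d}) = 1"
    and left: "\<forall>v\<in>{a, b, c, d}. fst a \<le> fst v"
    and right: "\<forall>v\<in>{a, b, c, d}. fst v \<le> fst c"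
    and top: "\<forall>v\<in>{a, b, c, d}. snd v \<le> snd b"
    and bottom: "\<forall>v\<in>{a, b, c, d}. snd d \<le> snd v"
    and width: "fst c - fst a = 1"
    and height: "snd b - snd d = W"
    and W: "2 / sqrt 5 < W" "W \<le> 1"
  shows "\<exists>p q r. \<not> collinear {p, q, r} \<and> convex hull {p, q, r} \<subseteq> convex hull {a, b, c, d} \<and>
           min (dist p q) (min (dist q r) (dist r p)) \<ge> sqrt (1 + 5 * W\<^sup>2) / 4"
proof -
  obtain a1 a2 where a: "a = (a1, a2)" by (cases a)
  define u where "u = fst b - a1"
  define h where "h = snd b - a2"
  define v where "v = fst d - a1"
  define k where "k = a2 - snd d"
  have b: "b = (a1 + u, a2 + h)" by (simp add: u_def h_def)
  have d: "d = (a1 + v, a2 - k)" by (simp add: v_def k_def)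
  have c: "c = (a1 + 1, a2)" using width horiz a by (simp add: prod_eq_iff)
  have hkW: "h + k = W" using height b d by simp
  have u01: "0 \<le> u" "u \<le> 1" using left right a b c by auto
  have v01: "0 \<le> v" "v \<le> 1" using left right a d c by auto
  have "cross2 (b - a) (c - b) = - h" by (simp add: a b c cross2_def field_simps)
  hence h0: "h > 0" using quad unfolding convex_quad_cw_def by simp
  have "cross2 (d - c) (a - d) = - k" by (simp add: a d c cross2_def field_simps)
  hence k0: "k > 0" using quad unfolding convex_quad_cw_def by simp
  define H where "H = convex hull {a, b, c, d}"
  have cH: "convex H" unfolding H_def by simp
  have inH: "a \<in> H" "b \<in> H" "c \<in> H" "d \<in> H" unfolding H_def by (simp_all add: hull_inc)
  have midH: "(1/2) *\<^sub>R x + (1/2) *\<^sub>R y \<in> H" if "x \<in> H" "y \<in> H" for x y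
    using convexD[OF cH that] by simp
  have bdd: "bounded H" unfolding H_def by (simp add: finite_imp_bounded_convex_hull)
  have "dist b d \<le> 1" using diameter_bounded_bound[OF bdd inH(2) inH(4)] diam H_def by simp
  hence "sqrt ((u - v)^2 + W^2) \<le> 1" using hkW by (simp add: b d dist_Pair_Pair dist_real_def)
  hence uvW: "(u - v)^2 + W^2 \<le> 1" by simp
  have vuW: "(v - u)^2 + W^2 \<le> 1" using uvW by (simp add: power2_commute)
  define S where "S = sqrt (1 + 5 * W^2)"
  have S: "S^2 = 1 + 5 * W^2" "S \<ge> 0" unfolding S_def by simp_all
  have "2 < W * sqrt 5" using W(1) by (simp add: divide_less_eq mult.commute)
  hence "2^2 < (W * sqrt 5)^2" by (intro power_strict_mono) auto
  hence W5: "5 * W^2 > 4" by (simp add: power_mult_distrib)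
  have W0: "W > 0" using h0 k0 hkW by linarith
  have W21: "W^2 \<le> 1" using W0 W(2) by (simp add: power_le_one)
  have S6: "S^2 \<le> 16" using S(1) W21 by simp
  have goal: "sqrt (1 + 5 * W\<^sup>2) / 4 = S / 4" unfolding S_def ..
  have "\<exists>p q r. \<not> collinear {p, q, r} \<and> convex hull {p, q, r} \<subseteq> H \<and>
           min (dist p q) (min (dist q r) (dist r p)) \<ge> S/4"
  proof (cases "4 * h \<ge> S")
    case True
    have hS: "(S/4)^2 \<le> h^2" using True S(2) by (intro power_mono) auto
    have hS': "S^2/16 \<le> h^2" using hS by (simp add: power_divide)
    have hS1: "S^2/16 \<le> u^2 + h^2" "S^2/16 \<le> (1-u)^2 + h^2"
      using hS' zero_le_power2[of u] zero_le_power2[of "1-u"] by linarith+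
    show ?thesis
    proof (rule tri[OF cH inH(1) inH(2) inH(3)])
      show "cross2 (b - a) (c - a) \<noteq> 0" using h0 by (simp add: a b c cross2_def)
      show "S/4 \<le> dist a b" by (rule dist_ge[where x=u and y=h]) (use hS1 S in \<open>auto simp: a b\<close>)
      show "S/4 \<le> dist b c" by (rule dist_ge[where x="1-u" and y=h]) (use hS1 S in \<open>auto simp: b c\<close>)
      show "S/4 \<le> dist c a" by (rule dist_ge[where x=1 and y=0]) (use S6 S in \<open>auto simp: a c\<close>)
    qed
  next
    case nh: False
    show ?thesis
    proof (cases "4 * k \<ge> S")
      case True
      have kS: "(S/4)^2 \<le> k^2" using True S(2) by (intro power_mono) auto
      have kS': "S^2/16 \<le> k^2" using kS by (simp add: power_divide)
      have kS1: "S^2/16 \<le> v^2 + k^2" "S^2/16 \<le> (1-v)^2 + k^2"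
        using kS' zero_le_power2[of v] zero_le_power2[of "1-v"] by linarith+
      show ?thesis
      proof (rule tri[OF cH inH(1) inH(3) inH(4)])
        show "cross2 (c - a) (d - a) \<noteq> 0" using k0 by (simp add: a d c cross2_def)
        show "S/4 \<le> dist a c" by (rule dist_ge[where x=1 and y=0]) (use S6 S in \<open>auto simp: a c\<close>)
        show "S/4 \<le> dist c d" by (rule dist_ge[where x="1-v" and y=k]) (use kS1 S in \<open>auto simp: d c\<close>)
        show "S/4 \<le> dist d a" by (rule dist_ge[where x=v and y=k]) (use kS1 S in \<open>auto simp: a d\<close>)
      qed
    next
      case nk: False
      have hS: "4 * h < S" and kS: "4 * k < S" using nh nk by auto
      consider "u + v \<le> 1" "u \<le> v" | "u + v \<le> 1" "v \<le> u" | "u + v \<ge> 1" "v \<le> u" | "u + v \<ge> 1" "u \<le> v"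
        by linarith
      thus ?thesis
      proof cases
        case 1
        note C = core[OF h0 k0 hkW hS kS S W5 W(2) uvW 1]
        define M where "M = (1/2) *\<^sub>R a + (1/2) *\<^sub>R d"
        have M: "M = (a1 + v/2, a2 - k/2)" by (simp add: M_def a d field_simps)
        show ?thesis
        proof (rule tri[OF cH inH(2) inH(3) midH[OF inH(1) inH(4), folded M_def]])
          have "cross2 (c - b) (M - b) = - ((1-u)*k/2) - h*(1-v/2)"
            by (simp add: M b c cross2_def field_simps)
          moreover have "(1-u)*k \<ge> 0" using u01 k0 by simp
          moreover have "h*(1-v/2) > 0" using v01 h0 by simp
          ultimately show "cross2 (c - b) (M - b) \<noteq> 0" by linarith
          show "S/4 \<le> dist b c" by (rule dist_ge[where x="1-u" and y=h]) (use C S in \<open>auto simp: b c\<close>)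
          show "S/4 \<le> dist c M" by (rule dist_ge[where x="1-v/2" and y="k/2"]) (use C S in \<open>auto simp: M c\<close>)
          show "S/4 \<le> dist M b" by (rule dist_ge[where x="v/2-u" and y="k/2+h"]) (use C S in \<open>auto simp: M b\<close>)
        qed
      next
        case 2
        have kh: "k + h = W" and vu1: "v + u \<le> 1" using hkW 2 by auto
        note C = core[OF k0 h0 kh kS hS S W5 W(2) vuW vu1 2(2)]
        define M where "M = (1/2) *\<^sub>R a + (1/2) *\<^sub>R b"
        have M: "M = (a1 + u/2, a2 + h/2)" by (simp add: M_def a b field_simps)
        show ?thesis
        proof (rule tri[OF cH inH(3) inH(4) midH[OF inH(1) inH(2), folded M_def]])
          have "cross2 (d - c) (M - c) = - ((1-v)*h/2) - k*(1-u/2)"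
            by (simp add: M d c cross2_def field_simps)
          moreover have "(1-v)*h \<ge> 0" using v01 h0 by simp
          moreover have "k*(1-u/2) > 0" using u01 k0 by simp
          ultimately show "cross2 (d - c) (M - c) \<noteq> 0" by linarith
          show "S/4 \<le> dist c d" by (rule dist_ge[where x="1-v" and y=k]) (use C S in \<open>auto simp: d c\<close>)
          show "S/4 \<le> dist d M" by (rule dist_ge[where x="u/2-v" and y="h/2+k"]) (use C S in \<open>auto simp: M d\<close>)
          show "S/4 \<le> dist M c" by (rule dist_ge[where x="1-u/2" and y="h/2"]) (use C S in \<open>auto simp: M c\<close>)
        qed
      next
        case 3
        have uv': "((1-u) - (1-v))^2 + W^2 \<le> 1" using uvW by (simp add: power2_commute)
        have vu1: "(1-u) + (1-v) \<le> 1" and vu2: "1-u \<le> 1-v" using 3 by auto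
        note C0 = core[OF h0 k0 hkW hS kS S W5 W(2) uv' vu1 vu2]
        have C: "S^2/16 \<le> u^2 + h^2" "S^2/16 \<le> ((1-v)/2-(1-u))^2 + (k/2+h)^2" "S^2/16 \<le> (1-(1-v)/2)^2 + (k/2)^2"
          using C0 by auto
        define M where "M = (1/2) *\<^sub>R c + (1/2) *\<^sub>R d"
        have M: "M = (a1 + (1+v)/2, a2 - k/2)" by (simp add: M_def c d field_simps)
        show ?thesis
        proof (rule tri[OF cH inH(1) inH(2) midH[OF inH(3) inH(4), folded M_def]])
          have "cross2 (b - a) (M - a) = - (u*k/2) - h*(1+v)/2"
            by (simp add: M b a cross2_def field_simps)
          moreover have "u*k \<ge> 0" using u01 k0 by simp
          moreover have "h*(1+v) > 0" using v01 h0 by simp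
          ultimately show "cross2 (b - a) (M - a) \<noteq> 0" by linarith
          show "S/4 \<le> dist a b" by (rule dist_ge[where x=u and y=h]) (use C S in \<open>auto simp: a b\<close>)
          show "S/4 \<le> dist b M" by (rule dist_ge[where x="(1-v)/2-(1-u)" and y="k/2+h"]) (use C S in \<open>auto simp: M b field_simps\<close>)
          show "S/4 \<le> dist M a" by (rule dist_ge[where x="1-(1-v)/2" and y="k/2"]) (use C S in \<open>auto simp: M a field_simps\<close>)
        qed
      next
        case 4
        have uv': "((1-v) - (1-u))^2 + W^2 \<le> 1" using vuW by (simp add: power2_commute)
        have kh: "k + h = W" and vu1: "(1-v) + (1-u) \<le> 1" and vu2: "1-v \<le> 1-u" using hkW 4 by auto
        note C0 = core[OF k0 h0 kh kS hS S W5 W(2) uv' vu1 vu2]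
        have C: "S^2/16 \<le> v^2 + k^2" "S^2/16 \<le> ((1-u)/2-(1-v))^2 + (h/2+k)^2" "S^2/16 \<le> (1-(1-u)/2)^2 + (h/2)^2"
          using C0 by auto
        define M where "M = (1/2) *\<^sub>R b + (1/2) *\<^sub>R c"
        have M: "M = (a1 + (1+u)/2, a2 + h/2)" by (simp add: M_def b c field_simps)
        show ?thesis
        proof (rule tri[OF cH inH(1) inH(4) midH[OF inH(2) inH(3), folded M_def]])
          have "cross2 (d - a) (M - a) = h * v / 2 + k * (1 + u) / 2"
            by (simp add: M d a cross2_def field_simps)
          moreover have "h * v \<ge> 0" using v01 h0 by simp
          moreover have "k*(1+u) > 0" using u01 k0 by simp
          ultimately show "cross2 (d - a) (M - a) \<noteq> 0" by linarith
          show "S/4 \<le> dist a d" by (rule dist_ge[where x=v and y=k]) (use C S in \<open>auto simp: a d\<close>)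
          show "S/4 \<le> dist d M" by (rule dist_ge[where x="(1-u)/2-(1-v)" and y="h/2+k"]) (use C S in \<open>auto simp: M d field_simps\<close>)
          show "S/4 \<le> dist M a" by (rule dist_ge[where x="1-(1-u)/2" and y="h/2"]) (use C S in \<open>auto simp: M a field_simps\<close>)
        qed
      qed
    qed
  qed
  thus ?thesis unfolding goal H_def .
qed

end
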